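(* For every functor $F\colon(\mathcal C^\eta)^{\times n}\to\mathsf{Ch}(R)$, the diagram \[tF\xrightarrow{\xi_F}ttF\xrightarrow{t(\xi_F)}tttF\qquad\text{and}\qquad tF\xrightarrow{\xi_F}ttF\xrightarrow{\xi_{tF}}tttF\] commutes, i.e. $t(\xi_F)\circ\xi_F=\xi_{tF}\circ\xi_F$.
   Context: $R$ is a commutative ring, $\mathsf{Ch}(R)$ the category of unbounded chain complexes of $R$-modules. $\mathcal C$ is a simplicial model category, $\eta\colon A\to B$ a morphism, $\mathcal C^\eta$ the category of factorizations $A\to X\to B$ of $\eta$. For $\mathbf X=(X_1,\dots,X_n)$ and $U\subseteq\mathbf n=\{1,\dots,n\}$, $\mathbf X(U)$ is the $n$-tuple with $i$th entry $X_i$ if $i\notin U$, $B$ if $i\in U$. For $G\colon(\mathcal C^\eta)^{\times n}\to\mathsf{Ch}(R)$, $tG(\mathbf X)$ is the chain complex with $tG(\mathbf X)_k=\bigoplus_{T\subseteq\mathbf n}G(\mathbf X(T))_{k+|T|}$ and differential sending $x$ in summand $T$ to $(-1)^{|T|}d(x)+\sum_{i\notin T}(-1)^{|\{s\in T:s>i\}|+1}G(\mathbf X(T)\to\mathbf X(T\cup\{i\}))(x)$ (term $i$ in summand $T\cup\{i\}$); $t$ is an endofunctor of the functor category, acting on natural transformations componentwise on summands. Thus $ttG(\mathbf X)_k=\bigoplus_{(V,U)\in\mathcal P(\mathbf n)^2}G(\mathbf X(U\cup V))_{k+|U|+|V|}$, $U$ the outer and $V$ the inner index. Identify $(V,U)$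 with the $2\times n$ $0/1$ matrix with first row the indicator of $V$, second row that of $U$. $M_{2n}(T)$ is the set of $2\times n$ $0/1$ matrices whose column sums are $1$ in columns $j\in T$ and $0$ otherwise; $\operatorname{sgn}(W)=|\{(i,j):i<j,\ w_{2i}=w_{1j}=1\}|$. For any $G$, $\xi_G\colon tG\to ttG$ sends $y\in G(\mathbf X(T))_{k+|T|}$ to $\sum_{W\in M_{2n}(T)}(-1)^{\operatorname{sgn}(W)}y$, the $W$-term in the summand indexed by the pair corresponding to $W$. *)

theory Defs
  imports Main "HOL-Library.Function_Algebras"
begin

definition nset :: "nat \<Rightarrow> nat set" where
  "nset n = {1..n}"

definition sgnmul :: "nat \<Rightarrow> 'e::ab_group_add \<Rightarrow> 'e" where
  "sgnmul k x = (if even k then x else - x)"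

text \<open>X(U): replace the entries indexed by U by the terminal factorization B.\<close>
definition subst_tuple :: "'o \<Rightarrow> (nat \<Rightarrow> 'o) \<Rightarrow> nat set \<Rightarrow> (nat \<Rightarrow> 'o)" where
  "subst_tuple B X U = (\<lambda>i. if i \<in> U then B else X i)"

text \<open>A functor from n-tuples of objects of C^eta to chain complexes, given by:
  the carrier of G(X)_k, the differential G(X)_k -> G(X)_(k-1), and the action
  G(X -> X({i})) of the canonical structure morphism X -> X({i}).\<close>
record ('o, 'e) chfun =
  car :: "(nat \<Rightarrow> 'o) \<Rightarrow> int \<Rightarrow> 'e set"
  dif :: "(nat \<Rightarrow> 'o) \<Rightarrow> int \<Rightarrow> 'e \<Rightarrow> 'e"
  str :: "(nat \<Rightarrow> 'o) \<Rightarrow> nat \<Rightarrow> 'e \<Rightarrow> 'e"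

text \<open>The functor t. An element of tG(X)_k is a function T |-> component in
  G(X(T))_(k+|T|), zero outside the subsets of n.\<close>
definition tfun :: "nat \<Rightarrow> 'o \<Rightarrow> ('o, 'e::ab_group_add) chfun \<Rightarrow> ('o, nat set \<Rightarrow> 'e) chfun" where
  "tfun n B G = \<lparr>
     car = (\<lambda>X k. {f. (\<forall>T. T \<subseteq> nset n \<longrightarrow> f T \<in> car G (subst_tuple B X T) (k + int (card T)))
                      \<and> (\<forall>T. \<not> T \<subseteq> nset n \<longrightarrow> f T = 0)}),
     dif = (\<lambda>X k f. (\<lambda>T'. if T' \<subseteq> nset n then
              sgnmul (card T') (dif G (subst_tuple B X T') (k + int (card T')) (f T'))
              + (\<Sum>i\<in>T'. sgnmul (card {s\<in>T'. s > i} + 1)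
                     (str G (subst_tuple B X (T' - {i})) i (f (T' - {i}))))
            else 0)),
     str = (\<lambda>X i f. (\<lambda>T. if T \<subseteq> nset n \<and> i \<notin> T then str G (subst_tuple B X T) i (f T) else f T)) \<rparr>"

definition tnat :: "nat \<Rightarrow> 'o \<Rightarrow> ((nat \<Rightarrow> 'o) \<Rightarrow> 'x \<Rightarrow> 'y) \<Rightarrow> (nat \<Rightarrow> 'o) \<Rightarrow> (nat set \<Rightarrow> 'x) \<Rightarrow> (nat set \<Rightarrow> 'y)" where
  "tnat n B \<alpha> X f = (\<lambda>T. \<alpha> (subst_tuple B X T) (f T))"

text \<open>2 x n 0/1 matrices, rows indexed 1,2 and columns 1..n, entries zero elsewhere.\<close>
definition M2n :: "nat \<Rightarrow> nat set \<Rightarrow> (nat \<Rightarrow> nat \<Rightarrow> nat) set" where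
  "M2n n T = {w. (\<forall>r j. w r j \<in> {0, 1})
               \<and> (\<forall>r j. (r \<notin> {1, 2} \<or> j \<notin> nset n) \<longrightarrow> w r j = 0)
               \<and> (\<forall>j\<in>nset n. w 1 j + w 2 j = (if j \<in> T then 1 else 0))}"

definition sgnW :: "nat \<Rightarrow> (nat \<Rightarrow> nat \<Rightarrow> nat) \<Rightarrow> nat" where
  "sgnW n w = card {(i, j). i \<in> nset n \<and> j \<in> nset n \<and> i < j \<and> w 2 i = 1 \<and> w 1 j = 1}"

definition row :: "nat \<Rightarrow> (nat \<Rightarrow> nat \<Rightarrow> nat) \<Rightarrow> nat \<Rightarrow> nat set" where
  "row n w r = {j \<in> nset n. w r j = 1}"

text \<open>xi_G : tG -> ttG. An element of ttG(X) is a function U |-> (V |-> component),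
  U the outer and V the inner index; the matrix W corresponds to (V,U) =
  (first row, second row).\<close>
definition xi :: "nat \<Rightarrow> (nat set \<Rightarrow> 'e::ab_group_add) \<Rightarrow> nat set \<Rightarrow> nat set \<Rightarrow> 'e" where
  "xi n f = (\<lambda>U V. \<Sum>T\<in>Pow (nset n).
       \<Sum>w\<in>{w \<in> M2n n T. row n w 1 = V \<and> row n w 2 = U}. sgnmul (sgnW n w) (f T))"

definition xinat :: "nat \<Rightarrow> (nat \<Rightarrow> 'o) \<Rightarrow> (nat set \<Rightarrow> 'e::ab_group_add) \<Rightarrow> nat set \<Rightarrow> nat set \<Rightarrow> 'e" where
  "xinat n X f = xi n f"

end

theory Submission
  imports Defs
begin

definition mat :: "nat set \<Rightarrow> nat set \<Rightarrow> nat \<Rightarrow> nat \<Rightarrow> nat" where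
  "mat V U = (\<lambda>r j. if r = 1 \<and> j \<in> V then 1 else if r = 2 \<and> j \<in> U then 1 else 0)"

definition PP :: "nat \<Rightarrow> nat set \<Rightarrow> nat set \<Rightarrow> (nat \<times> nat) set" where
  "PP n U V = {(i, j). i \<in> nset n \<and> j \<in> nset n \<and> i < j \<and> i \<in> U \<and> j \<in> V}"

lemma sgnW_mat: "sgnW n (mat V U) = card (PP n U V)"
  unfolding sgnW_def PP_def mat_def by (rule arg_cong[where f=card]) (auto split: if_splits)

lemma PP_fin: "finite (PP n U V)"
  by (rule finite_subset[of _ "nset n \<times> nset n"]) (auto simp: PP_def nset_def)

lemma PP_Un2: "U \<inter> V = {} \<Longrightarrow> card (PP n W (U \<union> V)) = card (PP n W U) + card (PP n W V)"
proof -
  assume "U \<inter> V = {}"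
  then have "PP n W (U \<union> V) = PP n W U \<union> PP n W V" "PP n W U \<inter> PP n W V = {}"
    by (auto simp: PP_def)
  then show ?thesis using PP_fin card_Un_disjoint by metis
qed

lemma PP_Un1: "U \<inter> V = {} \<Longrightarrow> card (PP n (U \<union> V) W) = card (PP n U W) + card (PP n V W)"
proof -
  assume "U \<inter> V = {}"
  then have "PP n (U \<union> V) W = PP n U W \<union> PP n V W" "PP n U W \<inter> PP n V W = {}"
    by (auto simp: PP_def)
  then show ?thesis using PP_fin card_Un_disjoint by metis
qed

lemma sgnmul_sgnmul: "sgnmul a (sgnmul b x) = sgnmul (a + b) x"
  by (simp add: sgnmul_def)

lemma sgnmul_fun: "sgnmul k g x = sgnmul k (g x)"
  by (simp add: sgnmul_def)

lemma inner_set: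
  assumes "T \<subseteq> nset n"
  shows "{w \<in> M2n n T. row n w 1 = V \<and> row n w 2 = U} =
    (if T = U \<union> V \<and> U \<subseteq> nset n \<and> V \<subseteq> nset n \<and> U \<inter> V = {} then {mat V U} else {})"
proof (cases "T = U \<union> V \<and> U \<subseteq> nset n \<and> V \<subseteq> nset n \<and> U \<inter> V = {}")
  case True
  have "mat V U \<in> M2n n T \<and> row n (mat V U) 1 = V \<and> row n (mat V U) 2 = U"
    using True by (auto simp: M2n_def mat_def row_def)
  moreover have "w = mat V U" if w: "w \<in> M2n n T" "row n w 1 = V" "row n w 2 = U" for w
  proof (rule ext, rule ext)
    fix r j
    have w01: "\<And>r j. w r j \<in> {0,1}" and w0: "\<And>r j. (r \<notin> {1, 2} \<or> j \<notin> nset n) \<Longrightarrow> w r j = 0"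
      using w(1) by (auto simp: M2n_def)
    show "w r j = mat V U r j"
    proof (cases "r \<in> {1,2} \<and> j \<in> nset n")
      case True
      then show ?thesis using w(2,3) w01[of r j] True \<open>T = U \<union> V \<and> U \<subseteq> nset n \<and> V \<subseteq> nset n \<and> U \<inter> V = {}\<close>
        by (auto simp: row_def mat_def)
    next
      case False
      then show ?thesis using w0[of r j] \<open>T = U \<union> V \<and> U \<subseteq> nset n \<and> V \<subseteq> nset n \<and> U \<inter> V = {}\<close>
        by (auto simp: mat_def)
    qed
  qed
  ultimately show ?thesis using True by auto
next
  case False
  have "False" if w: "w \<in> M2n n T" "row n w 1 = V" "row n w 2 = U" for w
  proof -
    have w01: "\<And>r j. w r j \<in> {0,1}" and
      ws: "\<And>j. j \<in> nset n \<Longrightarrow> w 1 j + w 2 j = (if j \<in> T then 1 else 0)"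
      using w(1) by (auto simp: M2n_def)
    have U: "U \<subseteq> nset n" "V \<subseteq> nset n" using w(2,3) by (auto simp: row_def)
    have d: "U \<inter> V = {}"
    proof (rule ccontr)
      assume "U \<inter> V \<noteq> {}"
      then obtain j where "j \<in> U" "j \<in> V" by auto
      then have "w 1 j = 1" "w 2 j = 1" "j \<in> nset n" using w(2,3) by (auto simp: row_def)
      then show False using ws[of j] by (simp split: if_splits)
    qed
    have "T = U \<union> V"
    proof (rule set_eqI)
      fix j show "j \<in> T \<longleftrightarrow> j \<in> U \<union> V"
      proof (cases "j \<in> nset n")
        case True
        then show ?thesis using ws[of j] w01[of 1 j] w01[of 2 j] w(2,3)
          by (auto simp: row_def split: if_splits)
      next
        case False then show ?thesis using assms U by auto
      qed
    qed
    then show False using False U d by simp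
  qed
  then show ?thesis using False by auto
qed

lemma xi_eq: "xi n f U V = (if U \<subseteq> nset n \<and> V \<subseteq> nset n \<and> U \<inter> V = {}
    then sgnmul (card (PP n U V)) (f (U \<union> V)) else 0)"
proof -
  have "xi n f U V = (\<Sum>T\<in>Pow (nset n).
     (if T = U \<union> V \<and> U \<subseteq> nset n \<and> V \<subseteq> nset n \<and> U \<inter> V = {}
      then sgnmul (card (PP n U V)) (f T) else 0))"
    unfolding xi_def
  proof (rule sum.cong)
    fix T assume "T \<in> Pow (nset n)"
    then show "(\<Sum>w\<in>{w \<in> M2n n T. row n w 1 = V \<and> row n w 2 = U}. sgnmul (sgnW n w) (f T)) =
     (if T = U \<union> V \<and> U \<subseteq> nset n \<and> V \<subseteq> nset n \<and> U \<inter> V = {}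
      then sgnmul (card (PP n U V)) (f T) else 0)"
      by (simp only: inner_set[of T n] Pow_iff) (simp add: sgnW_mat)
  qed simp
  also have "\<dots> = (if U \<subseteq> nset n \<and> V \<subseteq> nset n \<and> U \<inter> V = {}
    then sgnmul (card (PP n U V)) (f (U \<union> V)) else 0)"
  proof (cases "U \<subseteq> nset n \<and> V \<subseteq> nset n \<and> U \<inter> V = {}")
    case True
    then have "U \<union> V \<in> Pow (nset n)" by auto
    then show ?thesis using True
      by (simp only: True simp_thms sum.delta' finite_Pow_iff) (simp add: nset_def)
  next
    case False
    then show ?thesis by (simp only: False simp_thms if_False sum.neutral_const)
  qed
  finally show ?thesis .
qed

lemma sgnmul_zero: "sgnmul k (0::'a::ab_group_add) = 0"
  by (simp add: sgnmul_def)

theorem mainTheorem9: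
  fixes n :: nat and B :: 'o and F :: "('o, 'e::ab_group_add) chfun"
    and X :: "nat \<Rightarrow> 'o" and k :: int and f :: "nat set \<Rightarrow> 'e"
  assumes "f \<in> car (tfun n B F) X k"
  shows "tnat n B (xinat n) X (xinat n X f) = xinat n X (xinat n X f)"
proof (intro ext)
  fix U A C
  let ?c = "U \<subseteq> nset n \<and> A \<subseteq> nset n \<and> C \<subseteq> nset n \<and> U \<inter> A = {} \<and> U \<inter> C = {} \<and> A \<inter> C = {}"
  let ?r = "if ?c then sgnmul (card (PP n A C) + card (PP n U A) + card (PP n U C)) (f (U \<union> A \<union> C)) else 0"
  have L: "xi n (xi n f U) A C = ?r"
  proof (cases ?c)
    case True
    then show ?thesis
      by (simp add: xi_eq sgnmul_sgnmul PP_Un2 Int_Un_distrib Un_ac algebra_simps)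
  next
    case False
    then show ?thesis
      by (auto simp add: xi_eq sgnmul_zero Int_Un_distrib)
  qed
  have R: "xi n (xi n f) U A C = ?r"
  proof (cases ?c)
    case True
    then have "card (PP n (A \<union> U) C) = card (PP n A C) + card (PP n U C)"
      using PP_Un1[of A U n C] by auto
    then show ?thesis using True
      by (simp add: xi_eq sgnmul_fun sgnmul_sgnmul PP_Un1 Int_Un_distrib2 Un_ac algebra_simps)
  next
    case False
    then show ?thesis
      by (auto simp add: xi_eq sgnmul_fun sgnmul_zero Int_Un_distrib2)
  qed
  show "tnat n B (xinat n) X (xinat n X f) U A C = xinat n X (xinat n X f) U A C"
    unfolding tnat_def xinat_def using L R by simp
qed

end
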